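(* Let $G=(V=[n],E,(p_{uv})_{(u,v)\in E})$ be an influence graph, $k\in\{2,\dots,n\}$, $\pi$ an optimal adaptive policy with $|\pi|=k$, and $x_v$ the probability that node $v$ is selected by $\pi$. Then for every partial realisation $\psi$, $$\mathbb{E}_{\mathbf L,\hat{\mathbf L}}\big[\sigma^2_{\mathbf L,\hat{\mathbf L},\psi}(dom(\psi)\cup dom(\hat\Psi_\pi))\,\big|\,\psi\subseteq\Phi\big]\le\mathbb{E}_{\mathbf L}\big[\sigma_{\mathbf L}(dom(\psi))\,\big|\,\psi\subseteq\Phi\big]+\sum_{v\in V\setminus dom(\psi)}x_v\,\Delta^2_\psi(v).$$
   Context: $G$ is a directed graph with activation probabilities $p_{uv}\in[0,1]$. $\mathbf L,\hat{\mathbf L}$ are independent random subsets of $E$, each containing every edge $(u,w)$ independently with probability $p_{uw}$. For $L\subseteq E$, $T\subseteq V$, $\sigma_L(T)$ is the number of nodes reachable by a directed path (length $\ge0$) in $(V,L)$ from $T$. For $T\subseteq V$, $\mathbf L^2(T):=\mathbf L\cup(\hat{\mathbf L}\cap\{(u,w)\in E:u\in T\})$. Realisations: $\Phi(u):=\{u\}\cup\{z:(u,z)\in\mathbf L\}$, $\hat\Phi(u):=\{u\}\cup\{z:(u,z)\in\hat{\mathbf L}\}$. A partial realisation $\psi$ is the restriction of $u\mapsto\{u\}\cup\{z:(u,z)\in L\}$ (for some $L\subseteq E$) to a set $dom(\psi)\subseteq V$; $\psi\subseteq\Phi$ is the event $\Phi(u)=\psi(u)$ for all $u\in dom(\psi)$.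 For $T\subseteq V$, $\sigma^2_{\mathbf L,\hat{\mathbf L},\psi}(T):=\sigma_{\mathbf L^2(T\setminus dom(\psi))}(T)$, and $\Delta^2_\psi(v):=\mathbb{E}[\sigma^2_{\mathbf L,\hat{\mathbf L},\psi}(\{v\}\cup dom(\psi))-\sigma^2_{\mathbf L,\hat{\mathbf L},\psi}(dom(\psi))\mid\psi\subseteq\Phi]$ (conditioning on events of positive probability). An adaptive policy $\pi$ maps partial realisations to a node or STOP; it is run from the empty realisation, and while $\pi(\psi')=v\ne$ STOP it sets $\psi'\leftarrow\psi'\cup\{(v,\Phi(v))\}$, ending with $\Psi_\pi$; $\sigma(\pi):=\mathbb{E}[\sigma_{\mathbf L}(dom(\Psi_\pi))]$; $|\pi|=k$ means $|dom(\Psi_\pi)|=k$ always; $\pi$ is optimal if it maximizes $\sigma(\pi)$ among policies with $|\pi|=k$. $\hat\Psi_\pi$ is the final partial realisation when $\pi$ is run with feedback $\hat\Phi(v)$ in place of $\Phi(v)$. *)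

theory Defs
  imports Complex_Main
begin

text \<open>Influence graph on a finite node type 'a (V = UNIV), edge set E, activation
probabilities p. Random live-edge sets L are subsets of E; the probability of a
given L is the product below (edges independent).\<close>

definition influence_graph :: "('a::finite \<times> 'a) set \<Rightarrow> ('a \<times> 'a \<Rightarrow> real) \<Rightarrow> bool" where
  "influence_graph E p \<longleftrightarrow> (\<forall>e\<in>E. 0 \<le> p e \<and> p e \<le> 1)"

definition prL :: "('a \<times> 'a) set \<Rightarrow> ('a \<times> 'a \<Rightarrow> real) \<Rightarrow> ('a \<times> 'a) set \<Rightarrow> real" where
  "prL E p L = (\<Prod>e\<in>E. if e \<in> L then p e else 1 - p e)"

definition expL :: "('a \<times> 'a) set \<Rightarrow> ('a \<times> 'a \<Rightarrow> real) \<Rightarrow> (('a \<times> 'a) set \<Rightarrow> real) \<Rightarrow> real" where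
  "expL E p f = (\<Sum>L\<in>Pow E. prL E p L * f L)"

definition expLL :: "('a \<times> 'a) set \<Rightarrow> ('a \<times> 'a \<Rightarrow> real)
     \<Rightarrow> (('a \<times> 'a) set \<Rightarrow> ('a \<times> 'a) set \<Rightarrow> real) \<Rightarrow> real" where
  "expLL E p f = (\<Sum>L\<in>Pow E. \<Sum>Lh\<in>Pow E. prL E p L * prL E p Lh * f L Lh)"

definition sigmaL :: "('a::finite \<times> 'a) set \<Rightarrow> 'a set \<Rightarrow> nat" where
  "sigmaL L T = card {w. \<exists>t\<in>T. (t, w) \<in> L\<^sup>*}"

definition L2 :: "('a \<times> 'a) set \<Rightarrow> ('a \<times> 'a) set \<Rightarrow> ('a \<times> 'a) set \<Rightarrow> 'a set \<Rightarrow> ('a \<times> 'a) set" where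
  "L2 E L Lh T = L \<union> (Lh \<inter> {(u, w). (u, w) \<in> E \<and> u \<in> T})"

definition realis :: "('a \<times> 'a) set \<Rightarrow> 'a \<Rightarrow> 'a set" where
  "realis L u = insert u {z. (u, z) \<in> L}"

type_synonym 'a prealis = "'a \<Rightarrow> 'a set option"

definition partial_realisation :: "('a \<times> 'a) set \<Rightarrow> 'a prealis \<Rightarrow> bool" where
  "partial_realisation E \<psi> \<longleftrightarrow> (\<exists>L\<subseteq>E. \<forall>u\<in>dom \<psi>. \<psi> u = Some (realis L u))"

text \<open>The event psi \<subseteq> Phi, as a property of the edge set L generating Phi.\<close>
definition consistent :: "'a prealis \<Rightarrow> ('a \<times> 'a) set \<Rightarrow> bool" where
  "consistent \<psi> L \<longleftrightarrow> (\<forall>u\<in>dom \<psi>. \<psi> u = Some (realis L u))"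

definition prob_cons :: "('a \<times> 'a) set \<Rightarrow> ('a \<times> 'a \<Rightarrow> real) \<Rightarrow> 'a prealis \<Rightarrow> real" where
  "prob_cons E p \<psi> = expL E p (\<lambda>L. if consistent \<psi> L then 1 else 0)"

definition cexpL :: "('a \<times> 'a) set \<Rightarrow> ('a \<times> 'a \<Rightarrow> real) \<Rightarrow> 'a prealis
     \<Rightarrow> (('a \<times> 'a) set \<Rightarrow> real) \<Rightarrow> real" where
  "cexpL E p \<psi> f = expL E p (\<lambda>L. if consistent \<psi> L then f L else 0) / prob_cons E p \<psi>"

definition cexpLL :: "('a \<times> 'a) set \<Rightarrow> ('a \<times> 'a \<Rightarrow> real) \<Rightarrow> 'a prealis
     \<Rightarrow> (('a \<times> 'a) set \<Rightarrow> ('a \<times> 'a) set \<Rightarrow> real) \<Rightarrow> real" where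
  "cexpLL E p \<psi> f = expLL E p (\<lambda>L Lh. if consistent \<psi> L then f L Lh else 0) / prob_cons E p \<psi>"

definition sigma2 :: "('a::finite \<times> 'a) set \<Rightarrow> ('a \<times> 'a) set \<Rightarrow> ('a \<times> 'a) set \<Rightarrow> 'a prealis \<Rightarrow> 'a set \<Rightarrow> nat" where
  "sigma2 E L Lh \<psi> T = sigmaL (L2 E L Lh (T - dom \<psi>)) T"

definition Delta2 :: "('a::finite \<times> 'a) set \<Rightarrow> ('a \<times> 'a \<Rightarrow> real) \<Rightarrow> 'a prealis \<Rightarrow> 'a \<Rightarrow> real" where
  "Delta2 E p \<psi> v = cexpLL E p \<psi>
     (\<lambda>L Lh. real (sigma2 E L Lh \<psi> (insert v (dom \<psi>))) - real (sigma2 E L Lh \<psi> (dom \<psi>)))"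

text \<open>Adaptive policies: None = STOP, Some v = select node v.\<close>
type_synonym 'a policy = "'a prealis \<Rightarrow> 'a option"

definition pstep :: "'a policy \<Rightarrow> ('a \<Rightarrow> 'a set) \<Rightarrow> 'a prealis \<Rightarrow> 'a prealis" where
  "pstep \<pi> \<Phi> \<psi> = (case \<pi> \<psi> of None \<Rightarrow> \<psi> | Some v \<Rightarrow> \<psi>(v \<mapsto> \<Phi> v))"

definition prun :: "'a policy \<Rightarrow> ('a \<Rightarrow> 'a set) \<Rightarrow> nat \<Rightarrow> 'a prealis" where
  "prun \<pi> \<Phi> m = (pstep \<pi> \<Phi> ^^ m) Map.empty"

definition pstops :: "'a policy \<Rightarrow> ('a \<Rightarrow> 'a set) \<Rightarrow> bool" where
  "pstops \<pi> \<Phi> \<longleftrightarrow> (\<exists>m. \<pi> (prun \<pi> \<Phi> m) = None)"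

text \<open>Final partial realisation Psi_pi (meaningful when the run stops).\<close>
definition pfinal :: "'a policy \<Rightarrow> ('a \<Rightarrow> 'a set) \<Rightarrow> 'a prealis" where
  "pfinal \<pi> \<Phi> = prun \<pi> \<Phi> (LEAST m. \<pi> (prun \<pi> \<Phi> m) = None)"

definition policy_size :: "('a \<times> 'a) set \<Rightarrow> 'a policy \<Rightarrow> nat \<Rightarrow> bool" where
  "policy_size E \<pi> k \<longleftrightarrow>
     (\<forall>L\<subseteq>E. pstops \<pi> (realis L) \<and> card (dom (pfinal \<pi> (realis L))) = k)"

definition policy_value :: "('a::finite \<times> 'a) set \<Rightarrow> ('a \<times> 'a \<Rightarrow> real) \<Rightarrow> 'a policy \<Rightarrow> real" where
  "policy_value E p \<pi> = expL E p (\<lambda>L. real (sigmaL L (dom (pfinal \<pi> (realis L)))))"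

definition optimal_policy :: "('a::finite \<times> 'a) set \<Rightarrow> ('a \<times> 'a \<Rightarrow> real) \<Rightarrow> nat \<Rightarrow> 'a policy \<Rightarrow> bool" where
  "optimal_policy E p k \<pi> \<longleftrightarrow> policy_size E \<pi> k \<and>
     (\<forall>\<pi>'. policy_size E \<pi>' k \<longrightarrow> policy_value E p \<pi>' \<le> policy_value E p \<pi>)"

definition sel_prob :: "('a \<times> 'a) set \<Rightarrow> ('a \<times> 'a \<Rightarrow> real) \<Rightarrow> 'a policy \<Rightarrow> 'a \<Rightarrow> real" where
  "sel_prob E p \<pi> v = expL E p (\<lambda>L. if v \<in> dom (pfinal \<pi> (realis L)) then 1 else 0)"

end

theory Submission
  imports Defs
begin

lemma prL_split:
  assumes "finite E" "F \<subseteq> E" "A \<subseteq> F" "B \<subseteq> E - F"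
  shows "prL E p (A \<union> B) = prL F p A * prL (E - F) p B"
proof -
  have "prL E p (A \<union> B) = (\<Prod>e\<in>E - F. if e \<in> A \<union> B then p e else 1 - p e) *
        (\<Prod>e\<in>F. if e \<in> A \<union> B then p e else 1 - p e)"
    unfolding prL_def using assms by (simp add: prod.subset_diff)
  also have "(\<Prod>e\<in>E - F. if e \<in> A \<union> B then p e else 1 - p e) = prL (E - F) p B"
    unfolding prL_def using assms by (intro prod.cong) auto
  also have "(\<Prod>e\<in>F. if e \<in> A \<union> B then p e else 1 - p e) = prL F p A"
    unfolding prL_def using assms by (intro prod.cong) auto
  finally show ?thesis by simp
qed

lemma prL_sum1:
  assumes "finite F"
  shows "(\<Sum>A\<in>Pow F. prL F p A) = 1"
proof -
  have "(\<Sum>A\<in>Pow F. prL F p A) = (\<Sum>X\<in>Pow F. (\<Prod>x\<in>X. p x) * (\<Prod>x\<in>F-X. 1 - p x))"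
  proof (rule sum.cong)
    fix X assume X: "X \<in> Pow F"
    have "prL F p X = (\<Prod>e\<in>F - X. if e \<in> X then p e else 1 - p e) *
        (\<Prod>e\<in>X. if e \<in> X then p e else 1 - p e)"
      unfolding prL_def using assms X by (simp add: prod.subset_diff)
    also have "\<dots> = (\<Prod>x\<in>X. p x) * (\<Prod>x\<in>F-X. 1 - p x)" by simp
    finally show "prL F p X = (\<Prod>x\<in>X. p x) * (\<Prod>x\<in>F-X. 1 - p x)" .
  qed simp
  also have "\<dots> = (\<Prod>x\<in>F. p x + (1 - p x))"
    by (rule prod_add[symmetric]) (rule assms)
  finally show ?thesis by simp
qed

lemma sum_Pow_split:
  assumes "finite E" "F \<subseteq> E"
  shows "(\<Sum>L\<in>Pow E. prL E p L * h L) =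
     (\<Sum>A\<in>Pow F. \<Sum>B\<in>Pow (E - F). prL F p A * prL (E - F) p B * h (A \<union> B))"
proof -
  have img: "Pow E = (\<lambda>(A, B). A \<union> B) ` (Pow F \<times> Pow (E - F))"
  proof
    show "Pow E \<subseteq> (\<lambda>(A, B). A \<union> B) ` (Pow F \<times> Pow (E - F))"
    proof
      fix L assume "L \<in> Pow E"
      then have "L = (\<lambda>(A, B). A \<union> B) (L \<inter> F, L - F)" "(L \<inter> F, L - F) \<in> Pow F \<times> Pow (E - F)"
        by auto
      then show "L \<in> (\<lambda>(A, B). A \<union> B) ` (Pow F \<times> Pow (E - F))" by blast
    qed
  qed (use assms in auto)
  have inj: "inj_on (\<lambda>(A, B). A \<union> B) (Pow F \<times> Pow (E - F))"
  proof (rule inj_onI, clarsimp)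
    fix A B A' B' assume "A \<subseteq> F" "B \<subseteq> E - F" "A' \<subseteq> F" "B' \<subseteq> E - F" "A \<union> B = A' \<union> B'"
    then show "A = A' \<and> B = B'" by blast
  qed
  have "(\<Sum>L\<in>Pow E. prL E p L * h L) =
        (\<Sum>x\<in>Pow F \<times> Pow (E - F). prL E p (fst x \<union> snd x) * h (fst x \<union> snd x))"
    by (subst img, subst sum.reindex[OF inj]) (simp add: case_prod_beta)
  also have "\<dots> = (\<Sum>x\<in>Pow F \<times> Pow (E - F). prL F p (fst x) * prL (E - F) p (snd x) * h (fst x \<union> snd x))"
    using assms by (intro sum.cong) (auto simp: prL_split)
  also have "\<dots> = (\<Sum>A\<in>Pow F. \<Sum>B\<in>Pow (E - F). prL F p A * prL (E - F) p B * h (A \<union> B))"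
    by (simp add: sum.cartesian_product case_prod_beta)
  finally show ?thesis .
qed

lemma indep:
  assumes "finite E" "F \<subseteq> E"
  shows "(\<Sum>L\<in>Pow E. prL E p L * (a (L - F) * b (L \<inter> F))) =
    (\<Sum>L\<in>Pow E. prL E p L * a (L - F)) * (\<Sum>L\<in>Pow E. prL E p L * b (L \<inter> F))"
proof -
  have fF: "finite F" "finite (E - F)" using assms finite_subset by auto
  have e1: "(A \<union> B) - F = B" "(A \<union> B) \<inter> F = A" if "A \<subseteq> F" "B \<subseteq> E - F" for A B
    using that by auto
  have "(\<Sum>L\<in>Pow E. prL E p L * (a (L - F) * b (L \<inter> F))) =
     (\<Sum>A\<in>Pow F. \<Sum>B\<in>Pow (E - F). (prL F p A * b A) * (prL (E - F) p B * a B))"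
    unfolding sum_Pow_split[OF assms]
    by (intro sum.cong refl) (simp add: e1 mult_ac)
  also have "\<dots> = (\<Sum>A\<in>Pow F. prL F p A * b A) * (\<Sum>B\<in>Pow (E - F). prL (E - F) p B * a B)"
    by (simp add: sum_product)
  also have "(\<Sum>A\<in>Pow F. prL F p A * b A) = (\<Sum>L\<in>Pow E. prL E p L * b (L \<inter> F))"
  proof -
    have "(\<Sum>L\<in>Pow E. prL E p L * b (L \<inter> F)) =
      (\<Sum>A\<in>Pow F. \<Sum>B\<in>Pow (E - F). prL F p A * b A * prL (E - F) p B)"
      unfolding sum_Pow_split[OF assms]
      by (intro sum.cong refl) (simp add: e1 mult_ac)
    also have "\<dots> = (\<Sum>A\<in>Pow F. prL F p A * b A)"
      by (simp add: sum_distrib_left[symmetric] prL_sum1[OF fF(2)])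
    finally show ?thesis by simp
  qed
  also have "(\<Sum>B\<in>Pow (E - F). prL (E - F) p B * a B) = (\<Sum>L\<in>Pow E. prL E p L * a (L - F))"
  proof -
    have "(\<Sum>L\<in>Pow E. prL E p L * a (L - F)) =
      (\<Sum>A\<in>Pow F. prL F p A * (\<Sum>B\<in>Pow (E - F). prL (E - F) p B * a B))"
      unfolding sum_Pow_split[OF assms] sum_distrib_left
      by (intro sum.cong refl) (simp add: e1 mult_ac)
    also have "\<dots> = (\<Sum>B\<in>Pow (E - F). prL (E - F) p B * a B)"
      by (simp add: sum_distrib_right[symmetric] prL_sum1[OF fF(1)])
    finally show ?thesis by simp
  qed
  finally show ?thesis by (simp add: mult_ac)
qed


lemma prun_Suc: "prun \<pi> \<Phi> (Suc m) = pstep \<pi> \<Phi> (prun \<pi> \<Phi> m)"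
  by (simp add: prun_def)

lemma dom_prun_Suc: "dom (prun \<pi> \<Phi> (Suc m)) =
   dom (prun \<pi> \<Phi> m) \<union> (case \<pi> (prun \<pi> \<Phi> m) of None \<Rightarrow> {} | Some u \<Rightarrow> {u})"
  by (simp add: prun_Suc pstep_def split: option.splits)

lemma dom_prun_mono: "i \<le> j \<Longrightarrow> dom (prun \<pi> \<Phi> i) \<subseteq> dom (prun \<pi> \<Phi> j)"
proof (induction j rule: dec_induct)
  case (step n)
  then show ?case by (auto simp: dom_prun_Suc)
qed simp

lemma prun_agree:
  assumes "\<forall>u. u \<noteq> v \<longrightarrow> \<Phi>1 u = \<Phi>2 u"
  shows "v \<notin> dom (prun \<pi> \<Phi>1 m) \<Longrightarrow> prun \<pi> \<Phi>1 m = prun \<pi> \<Phi>2 m"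
proof (induction m)
  case 0
  then show ?case by (simp add: prun_def)
next
  case (Suc m)
  have "v \<notin> dom (prun \<pi> \<Phi>1 m)" using Suc.prems dom_prun_mono[of m "Suc m" \<pi> \<Phi>1] by auto
  then have eq: "prun \<pi> \<Phi>1 m = prun \<pi> \<Phi>2 m" using Suc.IH by simp
  show ?case
  proof (cases "\<pi> (prun \<pi> \<Phi>1 m)")
    case None
    then show ?thesis using eq by (simp add: prun_Suc pstep_def)
  next
    case (Some u)
    then have "u \<noteq> v" using Suc.prems by (auto simp: dom_prun_Suc)
    then show ?thesis using eq Some assms by (simp add: prun_Suc pstep_def)
  qed
qed

lemma pfinal_agree:
  assumes ag: "\<forall>u. u \<noteq> v \<longrightarrow> \<Phi>1 u = \<Phi>2 u"
    and st: "pstops \<pi> \<Phi>2" and nv: "v \<notin> dom (pfinal \<pi> \<Phi>2)"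
  shows "pfinal \<pi> \<Phi>1 = pfinal \<pi> \<Phi>2"
proof -
  define M where "M = (LEAST m. \<pi> (prun \<pi> \<Phi>2 m) = None)"
  have M1: "\<pi> (prun \<pi> \<Phi>2 M) = None" unfolding M_def using st unfolding pstops_def by (rule LeastI_ex)
  have M2: "\<pi> (prun \<pi> \<Phi>2 i) \<noteq> None" if "i < M" for i using that unfolding M_def by (rule not_less_Least)
  have ag': "\<forall>u. u \<noteq> v \<longrightarrow> \<Phi>2 u = \<Phi>1 u" using ag by auto
  have eqi: "prun \<pi> \<Phi>1 i = prun \<pi> \<Phi>2 i" if "i \<le> M" for i
  proof -
    have nvM: "v \<notin> dom (prun \<pi> \<Phi>2 M)" using nv unfolding pfinal_def M_def by simp
    have "v \<notin> dom (prun \<pi> \<Phi>2 i)" using nvM dom_prun_mono[OF that, of \<pi> \<Phi>2] by blast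
    then have "prun \<pi> \<Phi>2 i = prun \<pi> \<Phi>1 i" by (rule prun_agree[of v \<Phi>2 \<Phi>1, OF ag'])
    then show ?thesis by (rule sym)
  qed
  have "(LEAST m. \<pi> (prun \<pi> \<Phi>1 m) = None) = M"
  proof (rule Least_equality)
    show "\<pi> (prun \<pi> \<Phi>1 M) = None" using M1 eqi by simp
    fix y assume "\<pi> (prun \<pi> \<Phi>1 y) = None"
    then show "M \<le> y" using M2[of y] eqi[of y] by (cases "y < M") auto
  qed
  then show ?thesis unfolding pfinal_def M_def[symmetric] using eqi by simp
qed

lemma sel_agree:
  assumes ag: "\<forall>u. u \<noteq> v \<longrightarrow> \<Phi>1 u = \<Phi>2 u"
    and st1: "pstops \<pi> \<Phi>1" and st2: "pstops \<pi> \<Phi>2"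
  shows "(v \<in> dom (pfinal \<pi> \<Phi>1)) = (v \<in> dom (pfinal \<pi> \<Phi>2))"
proof -
  have ag': "\<forall>u. u \<noteq> v \<longrightarrow> \<Phi>2 u = \<Phi>1 u" using ag by auto
  show ?thesis
  proof (cases "v \<in> dom (pfinal \<pi> \<Phi>2)")
    case True
    show ?thesis
    proof (cases "v \<in> dom (pfinal \<pi> \<Phi>1)")
      case False
      then have "pfinal \<pi> \<Phi>2 = pfinal \<pi> \<Phi>1" by (rule pfinal_agree[OF ag' st1])
      then show ?thesis using True False by simp
    qed (use True in simp)
  next
    case False
    then have "pfinal \<pi> \<Phi>1 = pfinal \<pi> \<Phi>2" by (rule pfinal_agree[OF ag st2])
    then show ?thesis by simp
  qed
qed


lemma cover:
  fixes L Lh E :: "('a \<times> 'a) set" and D S :: "'a set"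
  assumes tw: "(t, w) \<in> (L2 E L Lh ((D \<union> S) - D))\<^sup>*" and t: "t \<in> D \<union> S"
  shows "w \<in> {w. \<exists>t\<in>D. (t, w) \<in> L\<^sup>*} \<union> (\<Union>v\<in>S - D. {w. (v, w) \<in> (L2 E L Lh {v})\<^sup>*})"
  using tw
proof (induction rule: rtrancl_induct)
  case base
  then show ?case using t by blast
next
  case (step y z)
  from step.hyps(2) have "(y, z) \<in> L \<or> ((y, z) \<in> Lh \<and> (y, z) \<in> E \<and> y \<in> S - D)"
    by (auto simp: L2_def)
  then show ?case
  proof
    assume yz: "(y, z) \<in> L"
    from step.IH show ?thesis
    proof
      assume "y \<in> {w. \<exists>t\<in>D. (t, w) \<in> L\<^sup>*}"
      then obtain t' where "t' \<in> D" "(t', y) \<in> L\<^sup>*" by blast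
      then have "(t', z) \<in> L\<^sup>*" using yz by (meson rtrancl_into_rtrancl)
      then show ?thesis using \<open>t' \<in> D\<close> by blast
    next
      assume "y \<in> (\<Union>v\<in>S - D. {w. (v, w) \<in> (L2 E L Lh {v})\<^sup>*})"
      then obtain v where v: "v \<in> S - D" "(v, y) \<in> (L2 E L Lh {v})\<^sup>*" by blast
      have "(y, z) \<in> L2 E L Lh {v}" using yz by (simp add: L2_def)
      then have "(v, z) \<in> (L2 E L Lh {v})\<^sup>*" using v(2) by (meson rtrancl_into_rtrancl)
      then show ?thesis using v(1) by blast
    qed
  next
    assume yz: "(y, z) \<in> Lh \<and> (y, z) \<in> E \<and> y \<in> S - D"
    then have "(y, z) \<in> L2 E L Lh {y}" by (simp add: L2_def)
    then have "(y, z) \<in> (L2 E L Lh {y})\<^sup>*" by (rule r_into_rtrancl)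
    then show ?thesis using yz by blast
  qed
qed

lemma pointwise:
  fixes E L Lh :: "('a::finite \<times> 'a) set" and \<psi> :: "'a prealis" and S :: "'a set"
  shows "real (sigma2 E L Lh \<psi> (dom \<psi> \<union> S)) \<le> real (sigmaL L (dom \<psi>)) +
    (\<Sum>v\<in>UNIV - dom \<psi>. (if v \<in> S then 1 else 0) *
        (real (sigma2 E L Lh \<psi> (insert v (dom \<psi>))) - real (sigma2 E L Lh \<psi> (dom \<psi>))))"
proof -
  define D where "D = dom \<psi>"
  define A where "A = {w. \<exists>t\<in>D. (t, w) \<in> L\<^sup>*}"
  define B where "B v = {w. (v, w) \<in> (L2 E L Lh {v})\<^sup>*}" for v
  have L20: "L2 E L Lh {} = L" by (simp add: L2_def)
  have s0: "sigma2 E L Lh \<psi> D = card A"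
    unfolding sigma2_def sigmaL_def A_def D_def by (simp add: L20)
  have s1: "card A + card (B v - A) \<le> sigma2 E L Lh \<psi> (insert v D)" if v: "v \<notin> D" for v
  proof -
    have e: "insert v D - dom \<psi> = {v}" using v D_def by auto
    have LL: "L \<subseteq> L2 E L Lh {v}" by (auto simp: L2_def)
    have sub: "A \<union> (B v - A) \<subseteq> {w. \<exists>t\<in>insert v D. (t, w) \<in> (L2 E L Lh {v})\<^sup>*}"
      unfolding A_def B_def using rtrancl_mono[OF LL] by blast
    have "card A + card (B v - A) = card (A \<union> (B v - A))"
      by (rule card_Un_disjoint[symmetric]) auto
    also have "\<dots> \<le> card {w. \<exists>t\<in>insert v D. (t, w) \<in> (L2 E L Lh {v})\<^sup>*}"
      by (rule card_mono[OF _ sub]) simp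
    also have "\<dots> = sigma2 E L Lh \<psi> (insert v D)"
      unfolding sigma2_def sigmaL_def e by simp
    finally show ?thesis .
  qed
  have cov: "{w. \<exists>t\<in>D \<union> S. (t, w) \<in> (L2 E L Lh ((D \<union> S) - D))\<^sup>*} \<subseteq> A \<union> (\<Union>v\<in>S - D. B v - A)"
  proof
    fix w assume "w \<in> {w. \<exists>t\<in>D \<union> S. (t, w) \<in> (L2 E L Lh ((D \<union> S) - D))\<^sup>*}"
    then obtain t where "t \<in> D \<union> S" "(t, w) \<in> (L2 E L Lh ((D \<union> S) - D))\<^sup>*" by blast
    from cover[OF this(2) this(1)] show "w \<in> A \<union> (\<Union>v\<in>S - D. B v - A)"
      unfolding A_def B_def by blast
  qed
  have "sigma2 E L Lh \<psi> (D \<union> S) \<le> card (A \<union> (\<Union>v\<in>S - D. B v - A))"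
    unfolding sigma2_def sigmaL_def D_def[symmetric] by (rule card_mono[OF _ cov]) simp
  also have "\<dots> \<le> card A + card (\<Union>v\<in>S - D. B v - A)" by (rule card_Un_le)
  also have "\<dots> \<le> card A + (\<Sum>v\<in>S - D. card (B v - A))"
    using card_UN_le[of "S - D" "\<lambda>v. B v - A"] by simp
  finally have c0: "sigma2 E L Lh \<psi> (D \<union> S) \<le> card A + (\<Sum>v\<in>S - D. card (B v - A))" .
  have "real (sigma2 E L Lh \<psi> (D \<union> S)) \<le> real (card A + (\<Sum>v\<in>S - D. card (B v - A)))"
    using c0 by (rule of_nat_mono)
  also have "\<dots> = real (card A) + (\<Sum>v\<in>S - D. real (card (B v - A)))" by simp
  also have "(\<Sum>v\<in>S - D. real (card (B v - A))) \<le>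
      (\<Sum>v\<in>S - D. real (sigma2 E L Lh \<psi> (insert v D)) - real (sigma2 E L Lh \<psi> D))"
  proof (rule sum_mono)
    fix v assume "v \<in> S - D"
    then have "card A + card (B v - A) \<le> sigma2 E L Lh \<psi> (insert v D)" using s1 by blast
    then show "real (card (B v - A)) \<le> real (sigma2 E L Lh \<psi> (insert v D)) - real (sigma2 E L Lh \<psi> D)"
      unfolding s0 by linarith
  qed
  also have "(\<Sum>v\<in>S - D. real (sigma2 E L Lh \<psi> (insert v D)) - real (sigma2 E L Lh \<psi> D)) =
      (\<Sum>v\<in>UNIV - D. (if v \<in> S then 1 else 0) *
        (real (sigma2 E L Lh \<psi> (insert v D)) - real (sigma2 E L Lh \<psi> D)))"
  proof -
    have "{v \<in> UNIV - D. v \<in> S} = S - D" by auto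
    then have "(\<Sum>v\<in>S - D. real (sigma2 E L Lh \<psi> (insert v D)) - real (sigma2 E L Lh \<psi> D)) =
      (\<Sum>v\<in>UNIV - D. if v \<in> S then
        real (sigma2 E L Lh \<psi> (insert v D)) - real (sigma2 E L Lh \<psi> D) else 0)"
      using sum.inter_filter[of "UNIV - D" "\<lambda>v. real (sigma2 E L Lh \<psi> (insert v D)) - real (sigma2 E L Lh \<psi> D)" "\<lambda>v. v \<in> S"]
      by simp
    moreover have "(\<Sum>v\<in>UNIV - D. (if v \<in> S then 1 else 0) *
        (real (sigma2 E L Lh \<psi> (insert v D)) - real (sigma2 E L Lh \<psi> D))) =
      (\<Sum>v\<in>UNIV - D. if v \<in> S then
        real (sigma2 E L Lh \<psi> (insert v D)) - real (sigma2 E L Lh \<psi> D) else 0)"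
      by (rule sum.cong) auto
    ultimately show ?thesis by simp
  qed
  finally show ?thesis unfolding D_def s0[unfolded D_def] sigmaL_def sigma2_def
    by (simp add: A_def D_def L20)
qed


lemma L2_Ov:
  assumes "T \<subseteq> {v}"
  shows "L2 E L (Lh \<inter> {(u, w). (u, w) \<in> E \<and> u = v}) T = L2 E L Lh T"
  using assms by (auto simp: L2_def)

theorem lemma16:
  fixes E :: "('a::finite \<times> 'a) set" and p :: "'a \<times> 'a \<Rightarrow> real"
    and k :: nat and \<pi> :: "'a policy" and \<psi> :: "'a prealis"
  assumes "influence_graph E p"
    and "2 \<le> k" and "k \<le> card (UNIV :: 'a set)"
    and "optimal_policy E p k \<pi>"
    and "partial_realisation E \<psi>"
    and "prob_cons E p \<psi> > 0"
  shows "cexpLL E p \<psi> (\<lambda>L Lh. real (sigma2 E L Lh \<psi> (dom \<psi> \<union> dom (pfinal \<pi> (realis Lh)))))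
         \<le> cexpL E p \<psi> (\<lambda>L. real (sigmaL L (dom \<psi>)))
           + (\<Sum>v\<in>UNIV - dom \<psi>. sel_prob E p \<pi> v * Delta2 E p \<psi> v)"
proof -
  have fin: "finite E" by simp
  have IG: "\<forall>e\<in>E. 0 \<le> p e \<and> p e \<le> 1" using assms(1) by (simp add: influence_graph_def)
  have prnn: "0 \<le> prL E p L" for L
    unfolding prL_def by (rule prod_nonneg) (use IG in auto)
  have pr1: "(\<Sum>L\<in>Pow E. prL E p L) = 1" by (rule prL_sum1[OF fin])
  have stops: "pstops \<pi> (realis L)" if "L \<subseteq> E" for L
    using assms(4) that by (auto simp: optimal_policy_def policy_size_def)
  define P where "P = prob_cons E p \<psi>"
  have Ppos: "P > 0" using assms(6) by (simp add: P_def)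
  define Sel where "Sel v Lh = (if v \<in> dom (pfinal \<pi> (realis Lh)) then 1 else 0 :: real)" for v Lh
  define Dv where "Dv v L Lh = real (sigma2 E L Lh \<psi> (insert v (dom \<psi>))) - real (sigma2 E L Lh \<psi> (dom \<psi>))" for v L Lh
  have pw: "real (sigma2 E L Lh \<psi> (dom \<psi> \<union> dom (pfinal \<pi> (realis Lh)))) \<le>
      real (sigmaL L (dom \<psi>)) + (\<Sum>v\<in>UNIV - dom \<psi>. Sel v Lh * Dv v L Lh)" for L Lh
    unfolding Sel_def Dv_def by (rule pointwise)
  define N where "N = (\<Sum>L\<in>Pow E. \<Sum>Lh\<in>Pow E. prL E p L * prL E p Lh *
      (if consistent \<psi> L then real (sigma2 E L Lh \<psi> (dom \<psi> \<union> dom (pfinal \<pi> (realis Lh)))) else 0))"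
  have LHS: "cexpLL E p \<psi> (\<lambda>L Lh. real (sigma2 E L Lh \<psi> (dom \<psi> \<union> dom (pfinal \<pi> (realis Lh))))) = N / P"
    unfolding cexpLL_def expLL_def N_def P_def by simp
  define T1 where "T1 = (\<Sum>L\<in>Pow E. \<Sum>Lh\<in>Pow E. prL E p L * prL E p Lh *
      (if consistent \<psi> L then real (sigmaL L (dom \<psi>)) else 0))"
  define T2 where "T2 v = (\<Sum>L\<in>Pow E. \<Sum>Lh\<in>Pow E. prL E p L * prL E p Lh *
      (if consistent \<psi> L then Sel v Lh * Dv v L Lh else 0))" for v
  have step1: "N \<le> T1 + (\<Sum>v\<in>UNIV - dom \<psi>. T2 v)"
  proof -
    have "N \<le> (\<Sum>L\<in>Pow E. \<Sum>Lh\<in>Pow E. prL E p L * prL E p Lh *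
      (if consistent \<psi> L then real (sigmaL L (dom \<psi>)) + (\<Sum>v\<in>UNIV - dom \<psi>. Sel v Lh * Dv v L Lh) else 0))"
      unfolding N_def
    proof (intro sum_mono mult_left_mono)
      fix L Lh
      show "(if consistent \<psi> L then real (sigma2 E L Lh \<psi> (dom \<psi> \<union> dom (pfinal \<pi> (realis Lh)))) else 0)
        \<le> (if consistent \<psi> L then real (sigmaL L (dom \<psi>)) + (\<Sum>v\<in>UNIV - dom \<psi>. Sel v Lh * Dv v L Lh) else 0)"
        using pw[of L Lh] by simp
      show "0 \<le> prL E p L * prL E p Lh" using prnn by simp
    qed
    also have "\<dots> = (\<Sum>L\<in>Pow E. \<Sum>Lh\<in>Pow E. prL E p L * prL E p Lh *
        (if consistent \<psi> L then real (sigmaL L (dom \<psi>)) else 0) +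
        (\<Sum>v\<in>UNIV - dom \<psi>. prL E p L * prL E p Lh * (if consistent \<psi> L then Sel v Lh * Dv v L Lh else 0)))"
    proof (intro sum.cong refl)
      fix L Lh
      show "prL E p L * prL E p Lh *
        (if consistent \<psi> L then real (sigmaL L (dom \<psi>)) + (\<Sum>v\<in>UNIV - dom \<psi>. Sel v Lh * Dv v L Lh) else 0) =
        prL E p L * prL E p Lh * (if consistent \<psi> L then real (sigmaL L (dom \<psi>)) else 0) +
        (\<Sum>v\<in>UNIV - dom \<psi>. prL E p L * prL E p Lh * (if consistent \<psi> L then Sel v Lh * Dv v L Lh else 0))"
        by (cases "consistent \<psi> L") (simp_all add: ring_distribs sum_distrib_left)
    qed
    also have "\<dots> = T1 + (\<Sum>v\<in>UNIV - dom \<psi>. T2 v)"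
      unfolding T1_def T2_def sum.distrib
      by (simp add: sum.swap[where A = "UNIV - dom \<psi>"])
    finally show ?thesis .
  qed
  have step2: "T1 = P * cexpL E p \<psi> (\<lambda>L. real (sigmaL L (dom \<psi>)))"
  proof -
    have "T1 = (\<Sum>L\<in>Pow E. prL E p L * (if consistent \<psi> L then real (sigmaL L (dom \<psi>)) else 0) *
        (\<Sum>Lh\<in>Pow E. prL E p Lh))"
      unfolding T1_def sum_distrib_left by (intro sum.cong refl) (simp add: mult_ac)
    also have "\<dots> = expL E p (\<lambda>L. if consistent \<psi> L then real (sigmaL L (dom \<psi>)) else 0)"
      unfolding pr1 expL_def by simp
    also have "\<dots> = P * cexpL E p \<psi> (\<lambda>L. real (sigmaL L (dom \<psi>)))"
      unfolding cexpL_def P_def using Ppos P_def by simp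
    finally show ?thesis .
  qed
  have step3: "T2 v = sel_prob E p \<pi> v * (P * Delta2 E p \<psi> v)" if v: "v \<in> UNIV - dom \<psi>" for v
  proof -
    define Ov where "Ov = {(u, w). (u, w) \<in> E \<and> u = v}"
    have OvE: "Ov \<subseteq> E" by (auto simp: Ov_def)
    define g where "g Lh = (\<Sum>L\<in>Pow E. prL E p L * (if consistent \<psi> L then Dv v L Lh else 0))" for Lh
    have a: "T2 v = (\<Sum>Lh\<in>Pow E. prL E p Lh * (Sel v Lh * g Lh))"
      unfolding T2_def g_def sum_distrib_left
      by (subst sum.swap) (intro sum.cong refl, simp add: mult_ac)
    have DvOv: "Dv v L (Lh \<inter> Ov) = Dv v L Lh" for L Lh
    proof -
      have "insert v (dom \<psi>) - dom \<psi> \<subseteq> {v}" "dom \<psi> - dom \<psi> \<subseteq> {v}" by auto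
      then show ?thesis unfolding Dv_def sigma2_def Ov_def by (simp only: L2_Ov)
    qed
    have gOv: "g (Lh \<inter> Ov) = g Lh" for Lh unfolding g_def DvOv ..
    have SelOv: "Sel v (Lh - Ov) = Sel v Lh" if Lh: "Lh \<subseteq> E" for Lh
    proof -
      have ag: "\<forall>u. u \<noteq> v \<longrightarrow> realis Lh u = realis (Lh - Ov) u"
        by (auto simp: realis_def Ov_def)
      have "Lh - Ov \<subseteq> E" using Lh by auto
      then show ?thesis unfolding Sel_def
        using sel_agree[OF ag stops[OF Lh] stops[OF \<open>Lh - Ov \<subseteq> E\<close>]] by simp
    qed
    have "T2 v = (\<Sum>Lh\<in>Pow E. prL E p Lh * (Sel v (Lh - Ov) * g (Lh \<inter> Ov)))"
      unfolding a by (intro sum.cong refl) (simp add: SelOv gOv)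
    also have "\<dots> = (\<Sum>Lh\<in>Pow E. prL E p Lh * Sel v (Lh - Ov)) * (\<Sum>Lh\<in>Pow E. prL E p Lh * g (Lh \<inter> Ov))"
      by (rule indep[OF fin OvE])
    also have "\<dots> = (\<Sum>Lh\<in>Pow E. prL E p Lh * Sel v Lh) * (\<Sum>Lh\<in>Pow E. prL E p Lh * g Lh)"
      by (simp add: SelOv gOv)
    also have "(\<Sum>Lh\<in>Pow E. prL E p Lh * Sel v Lh) = sel_prob E p \<pi> v"
      unfolding sel_prob_def expL_def Sel_def ..
    also have "(\<Sum>Lh\<in>Pow E. prL E p Lh * g Lh) = P * Delta2 E p \<psi> v"
    proof -
      have "(\<Sum>Lh\<in>Pow E. prL E p Lh * g Lh) = (\<Sum>L\<in>Pow E. \<Sum>Lh\<in>Pow E. prL E p L * prL E p Lh *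
          (if consistent \<psi> L then Dv v L Lh else 0))"
        unfolding g_def sum_distrib_left
        by (subst sum.swap) (intro sum.cong refl, simp add: mult_ac)
      also have "\<dots> = P * Delta2 E p \<psi> v"
        unfolding Delta2_def cexpLL_def expLL_def Dv_def P_def using Ppos P_def by simp
      finally show ?thesis .
    qed
    finally show ?thesis .
  qed
  have "N \<le> P * cexpL E p \<psi> (\<lambda>L. real (sigmaL L (dom \<psi>))) + (\<Sum>v\<in>UNIV - dom \<psi>. sel_prob E p \<pi> v * (P * Delta2 E p \<psi> v))"
    using step1 step2 step3 by simp
  also have "\<dots> = P * (cexpL E p \<psi> (\<lambda>L. real (sigmaL L (dom \<psi>))) + (\<Sum>v\<in>UNIV - dom \<psi>. sel_prob E p \<pi> v * Delta2 E p \<psi> v))"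
    by (simp add: ring_distribs sum_distrib_left mult_ac)
  finally have "N \<le> P * (cexpL E p \<psi> (\<lambda>L. real (sigmaL L (dom \<psi>))) + (\<Sum>v\<in>UNIV - dom \<psi>. sel_prob E p \<pi> v * Delta2 E p \<psi> v))" .
  then show ?thesis unfolding LHS using Ppos by (simp add: divide_le_eq mult_ac)
qed

end
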